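(* Let $G$ be a simple connected graph on $n$ vertices with clique number $\omega$, $2\le\omega\le n-1$, and Wiener index $W$. Let $G_1,\dots,G_k$ be all the cliques of order $\omega$, $s_i=\sum_{v_j\in V(G_i)}D_j$, $a_i=n\omega(1-\omega)+4\omega(s_i-W)-ns_i$ and $b_i=4W\omega(\omega-1)+4s_i(W-s_i)$ for $1\le i\le k$. Then (i) $\displaystyle q^{\mathcal{D}}(G)\ge \max_{1\le i\le k}\frac{-a_i+\sqrt{a_i^{2}-4b_i(n-\omega)\omega}}{2(n-\omega)\omega}$; (ii) $\displaystyle q^{\mathcal{D}}_{min}(G)\le \min_{1\le i\le k}\frac{-a_i-\sqrt{a_i^{2}-4b_i(n-\omega)\omega}}{2(n-\omega)\omega}$.
   Context: $G$ has vertex set $\{v_1,\dots,v_n\}$; $d_G$ is the graph distance; $\mathcal{D}(G)=(d_G(v_i,v_j))$. $D_j=\sum_{l\ne j}d_G(v_j,v_l)$, $Tr(G)=\mathrm{diag}(D_1,\dots,D_n)$, $\mathcal{Q}(G)=Tr(G)+\mathcal{D}(G)$. $W=\sum_{i<j}d_G(v_i,v_j)$. The clique number is the largest order of a complete subgraph. $q^{\mathcal{D}}(G)$, $q^{\mathcal{D}}_{min}(G)$ are the largest and least eigenvalues of $\mathcal{Q}(G)$. *)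

theory Defs
  imports "HOL-Analysis.Analysis"
begin

definition simple_graph :: "('a \<Rightarrow> 'a \<Rightarrow> bool) \<Rightarrow> bool" where
  "simple_graph E \<longleftrightarrow> (\<forall>u v. E u v \<longrightarrow> E v u) \<and> (\<forall>u. \<not> E u u)"

definition is_walk :: "('a \<Rightarrow> 'a \<Rightarrow> bool) \<Rightarrow> 'a list \<Rightarrow> bool" where
  "is_walk E p \<longleftrightarrow> p \<noteq> [] \<and> (\<forall>i. Suc i < length p \<longrightarrow> E (p ! i) (p ! Suc i))"

definition graph_connected :: "('a \<Rightarrow> 'a \<Rightarrow> bool) \<Rightarrow> bool" where
  "graph_connected E \<longleftrightarrow> (\<forall>u v. \<exists>p. is_walk E p \<and> hd p = u \<and> last p = v)"

definition gdist :: "('a \<Rightarrow> 'a \<Rightarrow> bool) \<Rightarrow> 'a \<Rightarrow> 'a \<Rightarrow> nat" where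
  "gdist E u v = (LEAST k. \<exists>p. is_walk E p \<and> hd p = u \<and> last p = v \<and> length p = Suc k)"

definition transmission :: "('a::finite \<Rightarrow> 'a \<Rightarrow> bool) \<Rightarrow> 'a \<Rightarrow> real" where
  "transmission E u = (\<Sum>w\<in>UNIV - {u}. real (gdist E u w))"

text \<open>Wiener index W = sum over unordered pairs {u,v}, u \<noteq> v, of d(u,v);
written as half the sum over ordered pairs (d is symmetric).\<close>
definition wiener :: "('a::finite \<Rightarrow> 'a \<Rightarrow> bool) \<Rightarrow> real" where
  "wiener E = (\<Sum>u\<in>UNIV. \<Sum>v\<in>UNIV - {u}. real (gdist E u v)) / 2"

definition dist_matrix :: "('a::finite \<Rightarrow> 'a \<Rightarrow> bool) \<Rightarrow> real^'a^'a" where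
  "dist_matrix E = (\<chi> i j. real (gdist E i j))"

definition transmission_matrix :: "('a::finite \<Rightarrow> 'a \<Rightarrow> bool) \<Rightarrow> real^'a^'a" where
  "transmission_matrix E = (\<chi> i j. if i = j then transmission E i else 0)"

definition dist_signless_laplacian :: "('a::finite \<Rightarrow> 'a \<Rightarrow> bool) \<Rightarrow> real^'a^'a" where
  "dist_signless_laplacian E = transmission_matrix E + dist_matrix E"

definition is_eigenvalue :: "real^'n^'n \<Rightarrow> real \<Rightarrow> bool" where
  "is_eigenvalue A l \<longleftrightarrow> (\<exists>v. v \<noteq> 0 \<and> A *v v = l *\<^sub>R v)"

text \<open>For a real symmetric matrix all eigenvalues are real, so these are the
largest and least eigenvalues.\<close>
definition largest_eigenvalue :: "real^'n^'n \<Rightarrow> real" where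
  "largest_eigenvalue A = Max {l. is_eigenvalue A l}"

definition least_eigenvalue :: "real^'n^'n \<Rightarrow> real" where
  "least_eigenvalue A = Min {l. is_eigenvalue A l}"

definition is_clique :: "('a \<Rightarrow> 'a \<Rightarrow> bool) \<Rightarrow> 'a set \<Rightarrow> bool" where
  "is_clique E K \<longleftrightarrow> (\<forall>u\<in>K. \<forall>v\<in>K. u \<noteq> v \<longrightarrow> E u v)"

definition clique_number :: "('a::finite \<Rightarrow> 'a \<Rightarrow> bool) \<Rightarrow> nat" where
  "clique_number E = Max (card ` {K. is_clique E K})"

definition clique_trans_sum :: "('a::finite \<Rightarrow> 'a \<Rightarrow> bool) \<Rightarrow> 'a set \<Rightarrow> real" where
  "clique_trans_sum E K = (\<Sum>v\<in>K. transmission E v)"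

definition coef_a :: "('a::finite \<Rightarrow> 'a \<Rightarrow> bool) \<Rightarrow> 'a set \<Rightarrow> real" where
  "coef_a E K = (let n = real CARD('a); w = real (clique_number E); W = wiener E;
                    s = clique_trans_sum E K
                 in n * w * (1 - w) + 4 * w * (s - W) - n * s)"

definition coef_b :: "('a::finite \<Rightarrow> 'a \<Rightarrow> bool) \<Rightarrow> 'a set \<Rightarrow> real" where
  "coef_b E K = (let w = real (clique_number E); W = wiener E;
                    s = clique_trans_sum E K
                 in 4 * W * w * (w - 1) + 4 * s * (W - s))"

end

theory Submission
  imports Defs
begin

definition symm :: "real^'n^'n \<Rightarrow> bool" where "symm A \<longleftrightarrow> (\<forall>i j. A$i$j = A$j$i)"

lemma sym_form:
  fixes A :: "real^'n^'n"
  assumes "symm A" shows "x \<bullet> (A *v y) = y \<bullet> (A *v x)"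
proof -
  have "x \<bullet> (A *v y) = (\<Sum>i\<in>UNIV. \<Sum>j\<in>UNIV. x$i * A$i$j * y$j)"
    by (simp add: inner_vec_def matrix_vector_mult_def sum_distrib_left mult.assoc)
  also have "\<dots> = (\<Sum>j\<in>UNIV. \<Sum>i\<in>UNIV. x$i * A$i$j * y$j)" by (rule sum.swap)
  also have "\<dots> = y \<bullet> (A *v x)"
    using assms by (simp add: symm_def inner_vec_def matrix_vector_mult_def sum_distrib_left mult_ac)
  finally show ?thesis .
qed

lemma psd_zero:
  fixes A :: "real^'n^'n"
  assumes "symm A" and psd: "\<And>x. 0 \<le> x \<bullet> (A *v x)" and z: "x \<bullet> (A *v x) = 0"
  shows "A *v x = 0"
proof (rule ccontr)
  assume ne: "A *v x \<noteq> 0"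
  define y where "y = A *v x"
  define K where "K = y \<bullet> y"
  define G where "G = y \<bullet> (A *v y)"
  have K: "K > 0" using ne by (simp add: K_def y_def)
  have G: "G \<ge> 0" using psd by (simp add: G_def)
  have expand: "(x + t *\<^sub>R y) \<bullet> (A *v (x + t *\<^sub>R y)) = 2 * t * K + t^2 * G" for t
  proof -
    have "(x + t *\<^sub>R y) \<bullet> (A *v (x + t *\<^sub>R y)) = x \<bullet> (A *v x) + t * (x \<bullet> (A *v y)) + t * (y \<bullet> (A *v x)) + t*t * (y \<bullet> (A *v y))"
      by (simp add: matrix_vector_right_distrib matrix_vector_mult_scaleR inner_add_left inner_add_right algebra_simps)
    also have "\<dots> = 2 * t * K + t^2 * G"
      using sym_form[OF assms(1), of x y] z by (simp add: K_def G_def y_def power2_eq_square)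
    finally show ?thesis .
  qed
  define t where "t = - K / (G + 1)"
  have "0 \<le> 2 * t * K + t^2 * G" using psd[of "x + t *\<^sub>R y"] expand by simp
  hence "0 \<le> (2 * t * K + t^2 * G) * (G+1)^2" using G by simp
  also have "(2 * t * K + t^2 * G) * (G+1)^2 = 2*K*(t*(G+1))*(G+1) + (t*(G+1))^2*G"
    by (simp add: algebra_simps power2_eq_square)
  also have "t*(G+1) = -K" using G by (simp add: t_def)
  also have "2*K*(-K)*(G+1) + (-K)^2*G = K^2 * (- G - 2)"
    by (simp add: algebra_simps power2_eq_square)
  also have "\<dots> < 0" using K G by (simp add: mult_pos_neg)
  finally show False by simp
qed

lemma eig_finite:
  fixes A :: "real^'n^'n"
  assumes "symm A" shows "finite {l. is_eigenvalue A l}"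
proof -
  define S where "S = {l. is_eigenvalue A l}"
  define v where "v l = (SOME v. v \<noteq> 0 \<and> A *v v = l *\<^sub>R v)" for l
  have vp: "v l \<noteq> 0 \<and> A *v v l = l *\<^sub>R v l" if "l \<in> S" for l
  proof -
    from that obtain w where "w \<noteq> 0 \<and> A *v w = l *\<^sub>R w" by (auto simp: S_def is_eigenvalue_def)
    thus ?thesis unfolding v_def by (rule someI)
  qed
  have inj: "inj_on v S"
  proof (rule inj_onI)
    fix l m assume l: "l \<in> S" and m: "m \<in> S" and e: "v l = v m"
    have "l *\<^sub>R v l = A *v v l" using vp[OF l] by simp
    also have "\<dots> = A *v v m" using e by simp
    also have "\<dots> = m *\<^sub>R v m" using vp[OF m] by simp
    also have "\<dots> = m *\<^sub>R v l" using e by simp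
    finally have "l *\<^sub>R v l = m *\<^sub>R v l" .
    thus "l = m" using vp[OF l] by (simp add: scaleR_cancel_right)
  qed
  have orth: "pairwise orthogonal (v ` S)"
  proof (rule pairwiseI)
    fix x y assume xS: "x \<in> v ` S" and yS: "y \<in> v ` S" and xy: "x \<noteq> y"
    from xS obtain l where l: "l \<in> S" and x: "x = v l" by (rule imageE)
    from yS obtain m where m: "m \<in> S" and y: "y = v m" by (rule imageE)
    have "l \<noteq> m" using xy x y by metis
    have "x \<bullet> (A *v y) = y \<bullet> (A *v x)" by (rule sym_form[OF assms])
    moreover have "x \<bullet> (A *v y) = m * (x \<bullet> y)" using vp[OF m] y by simp
    moreover have "y \<bullet> (A *v x) = l * (x \<bullet> y)" using vp[OF l] x by (simp add: inner_commute)
    ultimately have "m * (x \<bullet> y) = l * (x \<bullet> y)" by simp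
    hence "x \<bullet> y = 0" using \<open>l \<noteq> m\<close> by simp
    thus "orthogonal x y" by (simp add: orthogonal_def)
  qed
  have "0 \<notin> v ` S"
  proof
    assume "0 \<in> v ` S"
    then obtain l where "l \<in> S" "0 = v l" by (rule imageE)
    thus False using vp[of l] by simp
  qed
  hence "finite (v ` S)" by (rule independent_imp_finite[OF pairwise_orthogonal_independent[OF orth]])
  thus ?thesis using finite_imageD[OF _ inj] by (simp add: S_def)
qed

lemma sym_top_eig:
  fixes A :: "real^'n^'n"
  assumes sA: "symm A" shows "\<exists>l. is_eigenvalue A l \<and> (\<forall>x. x \<bullet> (A *v x) \<le> l * (x \<bullet> x))"
proof -
  define f where "f x = x \<bullet> (A *v x)" for x :: "real^'n"
  have ne: "sphere (0::real^'n) 1 \<noteq> {}"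
  proof -
    obtain i :: 'n where True by simp
    have "axis i (1::real) \<in> sphere 0 1" by simp
    thus ?thesis by blast
  qed
  have cont: "continuous_on (sphere 0 1) f" unfolding f_def by (intro continuous_intros)
  obtain x0 where x0: "x0 \<in> sphere 0 1" and mx: "\<And>y. y \<in> sphere 0 1 \<Longrightarrow> f y \<le> f x0"
    using continuous_attains_sup[OF compact_sphere ne cont] by blast
  define l where "l = f x0"
  have bound: "f x \<le> l * (x \<bullet> x)" for x
  proof (cases "x = 0")
    case True thus ?thesis by (simp add: f_def)
  next
    case False
    define u where "u = (1 / norm x) *\<^sub>R x"
    have "u \<in> sphere 0 1" using False by (simp add: u_def)
    hence "f u \<le> l" using mx l_def by simp
    moreover have "f u = (1 / norm x) * (1 / norm x) * f x"
      unfolding f_def u_def matrix_vector_mult_scaleR inner_scaleR_left inner_scaleR_right by simp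
    moreover have "(1 / norm x) * (1 / norm x) * f x = f x / (norm x)^2"
      by (simp add: power2_eq_square)
    moreover have "x \<bullet> x = (norm x)^2" by (simp add: power2_norm_eq_inner)
    moreover have "(norm x)^2 > 0" using False by simp
    ultimately have h: "f x / (norm x)^2 \<le> l" and pos: "(norm x)^2 > 0" and xx: "x \<bullet> x = (norm x)^2" by auto
    have "f x \<le> l * (norm x)^2" using h pos by (simp add: pos_divide_le_eq)
    thus ?thesis using xx by simp
  qed
  define B where "B = (\<chi> i j. (if i = j then l else 0) - A$i$j)"
  have Bv: "B *v x = l *\<^sub>R x - A *v x" for x
  proof -
    have "(B *v x) $ i = (l *\<^sub>R x - A *v x) $ i" for i
    proof -
      have "(B *v x) $ i = (\<Sum>j\<in>UNIV. (if i = j then l * x$j else 0)) - (\<Sum>j\<in>UNIV. A$i$j * x$j)"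
      proof -
        have "(B *v x) $ i = (\<Sum>j\<in>UNIV. ((if i = j then l else 0) - A$i$j) * x$j)"
          unfolding matrix_vector_mult_def B_def by simp
        also have "\<dots> = (\<Sum>j\<in>UNIV. (if i = j then l * x$j else 0) - A$i$j * x$j)"
          by (rule sum.cong) (auto simp: left_diff_distrib)
        finally show ?thesis by (simp only: sum_subtractf)
      qed
      also have "(\<Sum>j\<in>UNIV. (if i = j then l * x$j else 0)) = l * x$i" by simp
      finally show ?thesis by (simp add: matrix_vector_mult_def)
    qed
    thus ?thesis by (simp add: vec_eq_iff)
  qed
  have sB: "symm B" using sA by (simp add: symm_def B_def)
  have "B *v x0 = 0"
  proof (rule psd_zero[OF sB])
    fix x
    have "x \<bullet> (B *v x) = l * (x \<bullet> x) - f x" unfolding Bv f_def inner_diff_right inner_scaleR_right by simp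
    thus "0 \<le> x \<bullet> (B *v x)" using bound[of x] by simp
  next
    have "norm x0 = 1" using x0 by simp
    hence "x0 \<bullet> x0 = 1" by (simp add: norm_eq_1)
    moreover have "x0 \<bullet> (B *v x0) = l * (x0 \<bullet> x0) - f x0" unfolding Bv f_def inner_diff_right inner_scaleR_right by simp
    ultimately show "x0 \<bullet> (B *v x0) = 0" by (simp add: l_def)
  qed
  hence "A *v x0 = l *\<^sub>R x0" unfolding Bv by simp
  moreover have "x0 \<noteq> 0" using x0 by auto
  ultimately have "is_eigenvalue A l" unfolding is_eigenvalue_def by blast
  moreover have "\<forall>x. x \<bullet> (A *v x) \<le> l * (x \<bullet> x)" using bound unfolding f_def by blast
  ultimately show ?thesis by blast
qed

lemma walk_rev:
  assumes "simple_graph E" "is_walk E p" shows "is_walk E (rev p)"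
  unfolding is_walk_def
proof (intro conjI allI impI)
  show "rev p \<noteq> []" using assms(2) by (simp add: is_walk_def)
next
  fix i assume i: "Suc i < length (rev p)"
  define m where "m = length p - Suc (Suc i)"
  have m1: "Suc m < length p" and m2: "length p - Suc i = Suc m" using i by (auto simp: m_def)
  have "E (p ! m) (p ! Suc m)" using assms(2) m1 by (simp add: is_walk_def)
  hence "E (p ! Suc m) (p ! m)" using assms(1) by (simp add: simple_graph_def)
  moreover have "rev p ! i = p ! Suc m" using i m2 by (simp add: rev_nth)
  moreover have "rev p ! Suc i = p ! m" using i by (simp add: rev_nth m_def)
  ultimately show "E (rev p ! i) (rev p ! Suc i)" by simp
qed

lemma gdist_sym:
  assumes "simple_graph E" shows "gdist E u v = gdist E v u"
proof -
  have "(\<exists>p. is_walk E p \<and> hd p = u \<and> last p = v \<and> length p = Suc k) \<longleftrightarrow>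
        (\<exists>p. is_walk E p \<and> hd p = v \<and> last p = u \<and> length p = Suc k)" for u v k
  proof -
    have imp: "\<exists>p. is_walk E p \<and> hd p = b \<and> last p = a \<and> length p = Suc k"
      if "is_walk E p \<and> hd p = a \<and> last p = b \<and> length p = Suc k" for a b p
    proof (intro exI conjI)
      show "is_walk E (rev p)" using walk_rev[OF assms] that by blast
      have "p \<noteq> []" using that by (simp add: is_walk_def)
      thus "hd (rev p) = b" "last (rev p) = a" using that by (simp_all add: hd_rev last_rev)
      show "length (rev p) = Suc k" using that by simp
    qed
    show ?thesis using imp by blast
  qed
  thus ?thesis unfolding gdist_def by presburger
qed

lemma gdist_refl: "gdist E u u = 0"
  unfolding gdist_def
  by (rule Least_eq_0) (rule exI[of _ "[u]"], simp add: is_walk_def)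

lemma gdist_edge:
  assumes "E u v" "u \<noteq> v" shows "gdist E u v = 1"
  unfolding gdist_def
proof (rule Least_equality)
  show "\<exists>p. is_walk E p \<and> hd p = u \<and> last p = v \<and> length p = Suc 1"
    using assms by (intro exI[of _ "[u,v]"]) (auto simp: is_walk_def nth_Cons split: nat.splits)
next
  fix k assume "\<exists>p. is_walk E p \<and> hd p = u \<and> last p = v \<and> length p = Suc k"
  then obtain p where p: "is_walk E p" "hd p = u" "last p = v" "length p = Suc k" by blast
  show "1 \<le> k"
  proof (rule ccontr)
    assume "\<not> 1 \<le> k"
    hence "length p = 1" using p by simp
    then obtain a where "p = [a]" by (cases p) auto
    thus False using p assms by auto
  qed
qed

lemma quad_alg:
  fixes S11 S12 S22 w N \<mu> :: real
  assumes "w > 0" "N > 0" "(S11 - \<mu>*w)*(S22 - \<mu>*N) = S12^2"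
  shows "\<exists>\<alpha> \<beta>. (\<alpha> \<noteq> 0 \<or> \<beta> \<noteq> 0) \<and>
     \<alpha>^2*S11 + 2*\<alpha>*\<beta>*S12 + \<beta>^2*S22 = \<mu>*(\<alpha>^2*w + \<beta>^2*N)"
proof -
  define p where "p = S11 - \<mu>*w"
  define r where "r = S22 - \<mu>*N"
  have pr: "p*r = S12^2" using assms(3) by (simp add: p_def r_def)
  have key: "\<alpha>^2*S11 + 2*\<alpha>*\<beta>*S12 + \<beta>^2*S22 - \<mu>*(\<alpha>^2*w + \<beta>^2*N)
      = \<alpha>^2*p + 2*\<alpha>*\<beta>*S12 + \<beta>^2*r" for \<alpha> \<beta>
    by (simp add: p_def r_def algebra_simps)
  show ?thesis
  proof (cases "S12 = 0")
    case False
    have "S12^2*p + 2*S12*(-p)*S12 + (-p)^2*r = 0"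
      using pr by (simp add: power2_eq_square algebra_simps)
    thus ?thesis using key[of S12 "-p"] False by (intro exI[of _ S12] exI[of _ "-p"]) auto
  next
    case True
    hence "p = 0 \<or> r = 0" using pr by simp
    thus ?thesis
    proof
      assume "p = 0" thus ?thesis using key[of 1 0] True by (intro exI[of _ 1] exI[of _ 0]) auto
    next
      assume "r = 0" thus ?thesis using key[of 0 1] True by (intro exI[of _ 0] exI[of _ 1]) auto
    qed
  qed
qed

lemma root_alg:
  fixes a b w N \<mu> t :: real
  assumes "w > 0" "N > 0" "a^2 - 4*b*N*w \<ge> 0" "t = sqrt (a^2 - 4*b*N*w)"
    "\<mu> = (-a + t)/(2*N*w) \<or> \<mu> = (-a - t)/(2*N*w)"
  shows "w*N*\<mu>^2 + a*\<mu> + b = 0"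
proof -
  have t2: "t^2 = a^2 - 4*b*N*w" using assms(3,4) by simp
  have m: "2*N*w*\<mu> = -a + t \<or> 2*N*w*\<mu> = -a - t" using assms(1,2,5) by auto
  have "4*N*w*(w*N*\<mu>^2 + a*\<mu> + b) = (2*N*w*\<mu>)^2 + 2*a*(2*N*w*\<mu>) + 4*N*w*b"
    by (simp add: algebra_simps power2_eq_square)
  also have "\<dots> = 0"
  proof -
    have e: "z^2 + 2*a*z + 4*N*w*b = 0" if "z = -a + t \<or> z = -a - t" for z
    proof -
      have "(-a + t)^2 + 2*a*(-a + t) + 4*N*w*b = t^2 - a^2 + 4*b*N*w" by (simp add: algebra_simps power2_eq_square)
      moreover have "(-a - t)^2 + 2*a*(-a - t) + 4*N*w*b = t^2 - a^2 + 4*b*N*w" by (simp add: algebra_simps power2_eq_square)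
      moreover have "t^2 - a^2 + 4*b*N*w = 0" using t2 by simp
      ultimately show ?thesis using that by auto
    qed
    show ?thesis using e[OF m] .
  qed
  finally show ?thesis using assms(1,2) by simp
qed

lemma coef_alg:
  fixes s W w N :: real
  shows "(s + w*(w-1) - \<mu>*w)*((4*W - 3* s + w*(w-1)) - \<mu>*N) - (s - w*(w-1))^2
     = w*N*\<mu>^2 + ((w+N)*w*(1-w) + 4*w*(s-W) - (w+N)* s)*\<mu> + (4*W*w*(w-1) + 4* s*(W-s))"
  by (simp add: algebra_simps power2_eq_square)

lemma disc_alg:
  fixes s W w N :: real
  assumes "w > 0" "N > 0"
  shows "((w+N)*w*(1-w) + 4*w*(s-W) - (w+N)* s)^2 - 4*(4*W*w*(w-1) + 4* s*(W-s))*N*w \<ge> 0"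
proof -
  have "((w+N)*w*(1-w) + 4*w*(s-W) - (w+N)* s)^2 - 4*(4*W*w*(w-1) + 4* s*(W-s))*N*w
    = ((s+w*(w-1))*N - (4*W-3* s+w*(w-1))*w)^2 + 4*w*N*(s-w*(w-1))^2"
    by (simp add: algebra_simps power2_eq_square)
  also have "\<dots> \<ge> 0" using assms by simp
  finally show ?thesis .
qed


lemma largest_bound:
  fixes A :: "real^'n^'n"
  assumes "symm A" shows "x \<bullet> (A *v x) \<le> largest_eigenvalue A * (x \<bullet> x)"
proof -
  obtain l where l: "is_eigenvalue A l" and b: "\<forall>x. x \<bullet> (A *v x) \<le> l * (x \<bullet> x)"
    using sym_top_eig[OF assms] by blast
  have "l \<le> largest_eigenvalue A" unfolding largest_eigenvalue_def
    using l eig_finite[OF assms] by (intro Max_ge) auto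
  hence "l * (x \<bullet> x) \<le> largest_eigenvalue A * (x \<bullet> x)" by (intro mult_right_mono) auto
  thus ?thesis using b by (meson order_trans)
qed

lemma neg_mv: "(- A) *v x = - (A *v x)" for A :: "real^'n^'n"
  by (simp add: vec_eq_iff matrix_vector_mult_def sum_negf)

lemma least_bound:
  fixes A :: "real^'n^'n"
  assumes "symm A" shows "least_eigenvalue A * (x \<bullet> x) \<le> x \<bullet> (A *v x)"
proof -
  have sn: "symm (- A)" using assms by (simp add: symm_def)
  obtain l where l: "is_eigenvalue (- A) l" and b: "\<forall>x. x \<bullet> ((- A) *v x) \<le> l * (x \<bullet> x)"
    using sym_top_eig[OF sn] by blast
  have l': "is_eigenvalue A (- l)"
  proof -
    obtain v where v0: "v \<noteq> 0" and ev: "(- A) *v v = l *\<^sub>R v" using l by (auto simp: is_eigenvalue_def)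
    have "A *v v = - ((- A) *v v)" by (simp add: neg_mv)
    also have "\<dots> = (- l) *\<^sub>R v" using ev by simp
    finally show ?thesis using v0 unfolding is_eigenvalue_def by blast
  qed
  have "least_eigenvalue A \<le> - l" unfolding least_eigenvalue_def
    using l' eig_finite[OF assms] by (intro Min_le) auto
  hence "least_eigenvalue A * (x \<bullet> x) \<le> (- l) * (x \<bullet> x)" by (intro mult_right_mono) auto
  also have "\<dots> \<le> x \<bullet> (A *v x)" using b[rule_format, of x] unfolding neg_mv by simp
  finally show ?thesis .
qed

definition SS :: "real^'a^'a \<Rightarrow> 'a set \<Rightarrow> 'a set \<Rightarrow> real" where
  "SS A X Y = (\<Sum>i\<in>X. \<Sum>j\<in>Y. A$i$j)"

lemma sum_split_UNIV: "sum f (UNIV::'a::finite set) = sum f K + sum f (- K)"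
proof -
  have "sum f (K \<union> - K) = sum f K + sum f (- K)" by (rule sum.union_disjoint) auto
  thus ?thesis by simp
qed

lemma SS_split_right: "SS A X UNIV = SS A X K + SS A X (- K)"
  unfolding SS_def by (simp add: sum_split_UNIV[of _ K] sum.distrib)

lemma SS_split_left: "SS A UNIV Y = SS A K Y + SS A (- K) Y"
  unfolding SS_def by (rule sum_split_UNIV)

lemma SS_swap: "symm A \<Longrightarrow> SS A X Y = SS A Y X"
  unfolding SS_def symm_def by (subst sum.swap) simp

lemma form_split:
  fixes A :: "real^'a^'a" and K :: "'a set"
  assumes "symm A"
  shows "(\<chi> i. if i \<in> K then \<alpha> else \<beta>) \<bullet> (A *v (\<chi> i. if i \<in> K then \<alpha> else \<beta>))
     = \<alpha>^2 * SS A K K + 2*\<alpha>*\<beta> * SS A K (- K) + \<beta>^2 * SS A (- K) (- K)"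
proof -
  define g where "g i = (if i \<in> K then \<alpha> else \<beta>)" for i
  define h where "h i = (\<Sum>j\<in>UNIV. g i * A$i$j * g j)" for i
  have "(\<chi> i. if i \<in> K then \<alpha> else \<beta>) \<bullet> (A *v (\<chi> i. if i \<in> K then \<alpha> else \<beta>)) = (\<Sum>i\<in>UNIV. h i)"
    unfolding h_def g_def by (simp add: inner_vec_def matrix_vector_mult_def sum_distrib_left mult.assoc)
  also have "\<dots> = sum h K + sum h (- K)" by (rule sum_split_UNIV)
  also have "sum h K = (\<Sum>i\<in>K. \<alpha>^2 * (\<Sum>j\<in>K. A$i$j) + \<alpha>*\<beta> * (\<Sum>j\<in>-K. A$i$j))"
  proof (rule sum.cong[OF refl])
    fix i assume i: "i \<in> K"
    have "h i = (\<Sum>j\<in>K. g i * A$i$j * g j) + (\<Sum>j\<in>-K. g i * A$i$j * g j)"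
      unfolding h_def by (rule sum_split_UNIV)
    also have "(\<Sum>j\<in>K. g i * A$i$j * g j) = \<alpha>^2 * (\<Sum>j\<in>K. A$i$j)"
      using i by (simp add: g_def sum_distrib_left power2_eq_square mult_ac)
    also have "(\<Sum>j\<in>-K. g i * A$i$j * g j) = \<alpha>*\<beta> * (\<Sum>j\<in>-K. A$i$j)"
      using i by (simp add: g_def sum_distrib_left mult_ac)
    finally show "h i = \<alpha>^2 * (\<Sum>j\<in>K. A$i$j) + \<alpha>*\<beta> * (\<Sum>j\<in>-K. A$i$j)" .
  qed
  also have "\<dots> = \<alpha>^2 * SS A K K + \<alpha>*\<beta> * SS A K (- K)"
    unfolding SS_def by (simp add: sum.distrib sum_distrib_left)
  also have "sum h (- K) = (\<Sum>i\<in>-K. \<alpha>*\<beta> * (\<Sum>j\<in>K. A$i$j) + \<beta>^2 * (\<Sum>j\<in>-K. A$i$j))"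
  proof (rule sum.cong[OF refl])
    fix i assume i: "i \<in> - K"
    have "h i = (\<Sum>j\<in>K. g i * A$i$j * g j) + (\<Sum>j\<in>-K. g i * A$i$j * g j)"
      unfolding h_def by (rule sum_split_UNIV)
    also have "(\<Sum>j\<in>K. g i * A$i$j * g j) = \<alpha>*\<beta> * (\<Sum>j\<in>K. A$i$j)"
      using i by (simp add: g_def sum_distrib_left mult_ac)
    also have "(\<Sum>j\<in>-K. g i * A$i$j * g j) = \<beta>^2 * (\<Sum>j\<in>-K. A$i$j)"
      using i by (simp add: g_def sum_distrib_left power2_eq_square mult_ac)
    finally show "h i = \<alpha>*\<beta> * (\<Sum>j\<in>K. A$i$j) + \<beta>^2 * (\<Sum>j\<in>-K. A$i$j)" .
  qed
  also have "\<dots> = \<alpha>*\<beta> * SS A (- K) K + \<beta>^2 * SS A (- K) (- K)"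
    unfolding SS_def by (simp add: sum.distrib sum_distrib_left)
  also have "SS A (- K) K = SS A K (- K)" by (rule SS_swap[OF assms])
  finally show ?thesis by (simp add: algebra_simps)
qed

lemma Qent: "dist_signless_laplacian E $ i $ j = (if i = j then transmission E i else 0) + real (gdist E i j)"
  by (simp add: dist_signless_laplacian_def transmission_matrix_def dist_matrix_def)

lemma Q_symm: "simple_graph E \<Longrightarrow> symm (dist_signless_laplacian E)"
  unfolding symm_def Qent using gdist_sym by fastforce

lemma dist_row: "(\<Sum>j\<in>UNIV. real (gdist E i j)) = transmission E i"
proof -
  have "(\<Sum>j\<in>UNIV. real (gdist E i j)) = real (gdist E i i) + (\<Sum>j\<in>UNIV - {i}. real (gdist E i j))"
    by (rule sum.remove) auto
  thus ?thesis by (simp add: gdist_refl transmission_def)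
qed

lemma Q_row: "(\<Sum>j\<in>UNIV. dist_signless_laplacian E $ i $ j) = 2 * transmission E i"
  unfolding Qent by (simp add: sum.distrib dist_row)

lemma Q_clique_row:
  assumes "is_clique E K" "i \<in> K" "finite K"
  shows "(\<Sum>j\<in>K. dist_signless_laplacian E $ i $ j) = transmission E i + (real (card K) - 1)"
proof -
  have "(\<Sum>j\<in>K. real (gdist E i j)) = real (gdist E i i) + (\<Sum>j\<in>K - {i}. real (gdist E i j))"
    using assms by (intro sum.remove) auto
  also have "(\<Sum>j\<in>K - {i}. real (gdist E i j)) = (\<Sum>j\<in>K - {i}. 1)"
    using assms by (intro sum.cong refl) (auto simp: is_clique_def gdist_edge)
  also have "\<dots> = real (card K) - 1"
  proof -
    have "card K > 0" using assms by (auto simp: card_gt_0_iff)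
    thus ?thesis using assms by (simp add: card_Diff_singleton of_nat_diff)
  qed
  finally have d: "(\<Sum>j\<in>K. real (gdist E i j)) = real (card K) - 1" by (simp add: gdist_refl)
  have "(\<Sum>j\<in>K. dist_signless_laplacian E $ i $ j) = (\<Sum>j\<in>K. (if i = j then transmission E i else 0)) + (\<Sum>j\<in>K. real (gdist E i j))"
    unfolding Qent by (rule sum.distrib)
  also have "(\<Sum>j\<in>K. (if i = j then transmission E i else 0)) = transmission E i"
    using assms by (simp add: sum.delta)
  finally show ?thesis using d by simp
qed


lemma clique_eig_bounds:
  fixes E :: "'a::finite \<Rightarrow> 'a \<Rightarrow> bool" and K :: "'a set"
  assumes sg: "simple_graph E" and cl: "is_clique E K" and cK: "card K = clique_number E"
    and w2: "2 \<le> clique_number E" and wn: "clique_number E \<le> CARD('a) - 1"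
    and mu: "\<mu> = (- coef_a E K + sqrt ((coef_a E K)\<^sup>2
                          - 4 * coef_b E K * real (CARD('a) - clique_number E) * real (clique_number E)))
                      / (2 * real (CARD('a) - clique_number E) * real (clique_number E))
           \<or> \<mu> = (- coef_a E K - sqrt ((coef_a E K)\<^sup>2
                          - 4 * coef_b E K * real (CARD('a) - clique_number E) * real (clique_number E)))
                      / (2 * real (CARD('a) - clique_number E) * real (clique_number E))"
  shows "least_eigenvalue (dist_signless_laplacian E) \<le> \<mu> \<and> \<mu> \<le> largest_eigenvalue (dist_signless_laplacian E)"
proof -
  define w where "w = real (clique_number E)"
  define N where "N = real (CARD('a) - clique_number E)"
  define s where "s = clique_trans_sum E K"
  define W where "W = wiener E"
  define Q where "Q = dist_signless_laplacian E"
  have sQ: "symm Q" unfolding Q_def by (rule Q_symm[OF sg])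
  have wpos: "w > 0" using w2 by (simp add: w_def)
  have cge: "CARD('a) \<ge> clique_number E + 1" using wn w2 by linarith
  have Npos: "N > 0" using cge by (simp add: N_def)
  have nN: "real CARD('a) = w + N" using cge by (simp add: w_def N_def of_nat_diff)
  have a: "coef_a E K = (w+N)*w*(1-w) + 4*w*(s-W) - (w+N)* s"
    unfolding coef_a_def Let_def by (simp add: nN w_def s_def W_def)
  have b: "coef_b E K = 4*W*w*(w-1) + 4* s*(W-s)"
    unfolding coef_b_def Let_def by (simp add: w_def s_def W_def)
  define aa where "aa = (w+N)*w*(1-w) + 4*w*(s-W) - (w+N)* s"
  define bb where "bb = 4*W*w*(w-1) + 4* s*(W-s)"
  have disc: "aa^2 - 4*bb*N*w \<ge> 0" unfolding aa_def bb_def by (rule disc_alg[OF wpos Npos])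
  have mu': "\<mu> = (-aa + sqrt (aa^2 - 4*bb*N*w))/(2*N*w) \<or> \<mu> = (-aa - sqrt (aa^2 - 4*bb*N*w))/(2*N*w)"
    using mu unfolding a b aa_def[symmetric] bb_def[symmetric] N_def[symmetric] w_def[symmetric] by simp
  have root: "w*N*\<mu>^2 + aa*\<mu> + bb = 0"
    by (rule root_alg[OF wpos Npos disc refl mu'])
  have det: "(s + w*(w-1) - \<mu>*w)*((4*W - 3* s + w*(w-1)) - \<mu>*N) = (s - w*(w-1))^2"
    using coef_alg[of s "w" \<mu> W N] root unfolding aa_def bb_def by simp
  obtain \<alpha> \<beta> where nz: "\<alpha> \<noteq> 0 \<or> \<beta> \<noteq> 0" and F:
     "\<alpha>^2*(s + w*(w-1)) + 2*\<alpha>*\<beta>*(s - w*(w-1)) + \<beta>^2*(4*W - 3* s + w*(w-1)) = \<mu>*(\<alpha>^2*w + \<beta>^2*N)"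
    using quad_alg[OF wpos Npos det] by blast
  define x where "x = (\<chi> i. if i \<in> K then \<alpha> else \<beta>)"
  have fin: "finite K" by simp
  have KK: "SS Q K K = s + w*(w-1)"
  proof -
    have "SS Q K K = (\<Sum>i\<in>K. transmission E i + (real (card K) - 1))"
      unfolding SS_def Q_def by (rule sum.cong[OF refl], rule Q_clique_row[OF cl _ fin])
    also have "\<dots> = s + real (card K) * (real (card K) - 1)"
      by (simp add: sum.distrib s_def clique_trans_sum_def)
    finally show ?thesis using cK by (simp add: w_def)
  qed
  have KU: "SS Q K UNIV = 2 * s"
    unfolding SS_def Q_def by (simp add: Q_row sum_distrib_left s_def clique_trans_sum_def)
  have UU: "SS Q UNIV UNIV = 4 * W"
  proof -
    have Wt: "W = (\<Sum>i\<in>UNIV. transmission E i) / 2"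
      by (simp add: W_def wiener_def transmission_def)
    have "SS Q UNIV UNIV = (\<Sum>i\<in>UNIV. 2 * transmission E i)"
      unfolding SS_def Q_def Q_row by simp
    also have "\<dots> = 2 * (\<Sum>i\<in>UNIV. transmission E i)" by (rule sum_distrib_left[symmetric])
    finally show ?thesis using Wt by simp
  qed
  have KL: "SS Q K (- K) = s - w*(w-1)" using SS_split_right[of Q K K] KK KU by simp
  have LU: "SS Q (- K) UNIV = 4*W - 2* s" using SS_split_left[where A=Q and K=K and Y=UNIV] KU UU by simp
  have LL: "SS Q (- K) (- K) = 4*W - 3* s + w*(w-1)"
    using SS_split_right[of Q "- K" K] LU SS_swap[OF sQ, of "- K" K] KL by simp
  have form: "x \<bullet> (Q *v x) = \<mu>*(\<alpha>^2*w + \<beta>^2*N)"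
    unfolding x_def form_split[OF sQ] KK KL LL using F by simp
  have cardL: "card (- K) = CARD('a) - clique_number E"
    using cK by (simp add: Compl_eq_Diff_UNIV card_Diff_subset)
  have xx: "x \<bullet> x = \<alpha>^2*w + \<beta>^2*N"
  proof -
    have "x \<bullet> x = (\<Sum>i\<in>UNIV. (if i \<in> K then \<alpha> else \<beta>)^2)"
      unfolding x_def inner_vec_def by (simp add: power2_eq_square)
    also have "\<dots> = (\<Sum>i\<in>K. (if i \<in> K then \<alpha> else \<beta>)^2) + (\<Sum>i\<in>-K. (if i \<in> K then \<alpha> else \<beta>)^2)"
      by (rule sum_split_UNIV)
    also have "(\<Sum>i\<in>K. (if i \<in> K then \<alpha> else \<beta>)^2) = (\<Sum>i\<in>K. \<alpha>^2)" by (rule sum.cong) auto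
    also have "(\<Sum>i\<in>-K. (if i \<in> K then \<alpha> else \<beta>)^2) = (\<Sum>i\<in>-K. \<beta>^2)" by (rule sum.cong) auto
    finally show ?thesis using cK cardL by (simp add: w_def N_def mult.commute)
  qed
  have xpos: "x \<bullet> x > 0"
  proof -
    have "\<alpha>^2*w \<ge> 0" "\<beta>^2*N \<ge> 0" using wpos Npos by auto
    moreover have "\<alpha>^2*w > 0 \<or> \<beta>^2*N > 0" using nz wpos Npos by auto
    ultimately show ?thesis unfolding xx by linarith
  qed
  have "\<mu> * (x \<bullet> x) \<le> largest_eigenvalue Q * (x \<bullet> x)"
    using largest_bound[OF sQ, of x] form xx by simp
  hence up: "\<mu> \<le> largest_eigenvalue Q" using xpos by simp
  have "least_eigenvalue Q * (x \<bullet> x) \<le> \<mu> * (x \<bullet> x)"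
    using least_bound[OF sQ, of x] form xx by simp
  hence lo: "least_eigenvalue Q \<le> \<mu>" using xpos by simp
  show ?thesis using up lo by (simp add: Q_def)
qed

theorem corollary4p7:
  fixes E :: "'a::finite \<Rightarrow> 'a \<Rightarrow> bool"
  assumes "simple_graph E" and "graph_connected E"
      and "2 \<le> clique_number E" and "clique_number E \<le> CARD('a) - 1"
  shows "(largest_eigenvalue (dist_signless_laplacian E) \<ge>
           Max ((\<lambda>K. (- coef_a E K + sqrt ((coef_a E K)\<^sup>2
                          - 4 * coef_b E K * real (CARD('a) - clique_number E) * real (clique_number E)))
                      / (2 * real (CARD('a) - clique_number E) * real (clique_number E)))
                ` {K. is_clique E K \<and> card K = clique_number E})) \<and>
         (least_eigenvalue (dist_signless_laplacian E) \<le>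
           Min ((\<lambda>K. (- coef_a E K - sqrt ((coef_a E K)\<^sup>2
                          - 4 * coef_b E K * real (CARD('a) - clique_number E) * real (clique_number E)))
                      / (2 * real (CARD('a) - clique_number E) * real (clique_number E)))
                ` {K. is_clique E K \<and> card K = clique_number E}))"
proof -
  define C where "C = {K. is_clique E K \<and> card K = clique_number E}"
  have finC: "finite C" by simp
  have "clique_number E \<in> card ` {K. is_clique E K}"
    unfolding clique_number_def
  proof (rule Max_in)
    show "finite (card ` {K. is_clique E K})" by simp
    have "is_clique E {}" by (simp add: is_clique_def)
    thus "card ` {K. is_clique E K} \<noteq> {}" by blast
  qed
  then obtain K0 where "is_clique E K0" "card K0 = clique_number E" by auto
  hence neC: "C \<noteq> {}" unfolding C_def by blast
  note cb = clique_eig_bounds[OF assms(1) _ _ assms(3) assms(4)]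
  show ?thesis
    unfolding C_def[symmetric]
  proof
    show "Max ((\<lambda>K. (- coef_a E K + sqrt ((coef_a E K)\<^sup>2
                          - 4 * coef_b E K * real (CARD('a) - clique_number E) * real (clique_number E)))
                      / (2 * real (CARD('a) - clique_number E) * real (clique_number E))) ` C)
          \<le> largest_eigenvalue (dist_signless_laplacian E)"
      using finC neC cb unfolding C_def by (subst Max_le_iff) auto
  next
    show "least_eigenvalue (dist_signless_laplacian E) \<le> Min ((\<lambda>K. (- coef_a E K - sqrt ((coef_a E K)\<^sup>2
                          - 4 * coef_b E K * real (CARD('a) - clique_number E) * real (clique_number E)))
                      / (2 * real (CARD('a) - clique_number E) * real (clique_number E))) ` C)"
      using finC neC cb unfolding C_def by (subst Min_ge_iff) auto
  qed
qed

end
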